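(* Fix $\gamma \in (\tfrac{2}{3},2)$ and let $x \in B_1^+(\mathrm{VI}_0)$. Suppose the Taub point $T_1$ belongs to the $\alpha$-limit set $\alpha(x)$. Then there exists a point $y \in \alpha(x)$ with $y \neq T_1$ and $\Omega(y) = 0$.
   Context: Set $q^* := \tfrac{3\gamma-2}{2} \in (0,2)$. On $\mathbb{R}^5$ with coordinates $(\Sigma_+,\Sigma_-,N_+,N_-,\Omega)$ consider the system (with $' = d/d\tau$) $\Sigma_+' = -(2-q)\Sigma_+ - 2N_-^2$, $\Sigma_-' = -(2-q)\Sigma_- - 2\sqrt{3}N_+N_-$, $N_+' = (q+2\Sigma_+)N_+ + 2\sqrt{3}\Sigma_- N_-$, $N_-' = (q+2\Sigma_+)N_- + 2\sqrt{3}\Sigma_- N_+$, $\Omega' = 2(q-q^* )\Omega$, where $q := 2(\Sigma_+^2+\Sigma_-^2) + q^*\Omega$. The phase space $B_1^+(\mathrm{VI}_0)$ is the set of points satisfying the constraint $\Omega + \Sigma_+^2 + \Sigma_-^2 + N_-^2 = 1$ together with $\Omega \ge 0$ and $N_- > |N_+|$; it is invariant under the flow, solutions exist for all $\tau\in\mathbb{R}$, and $\varphi^\tau(x)$ denotes the solution with $\varphi^0(x)=x$. The $\alpha$-limit set $\alpha(x)$ is the set of all limits of sequences $\varphi^{\tau_k}(x)$ with $\tau_k \to -\infty$ (these lie in the closure of $B_1^+(\mathrm{VI}_0)$ in $\mathbb{R}^5$). The Taub point $T_1$ is the point with $(\Sigma_+,\Sigma_-,N_+,N_-,\Omega) = (-1,0,0,0,0)$.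 *)

theory Defs
  imports "HOL-Analysis.Analysis"
begin

text \<open>Points of R^5 with coordinates (Sigma_+, Sigma_-, N_+, N_-, Omega) are
  represented as nested pairs (sp, sm, np, nm, om).\<close>

type_synonym state = "real \<times> real \<times> real \<times> real \<times> real"

definition qstar :: "real \<Rightarrow> real" where
  "qstar \<gamma> = (3 * \<gamma> - 2) / 2"

definition qfun :: "real \<Rightarrow> state \<Rightarrow> real" where
  "qfun \<gamma> p = (case p of (sp, sm, np, nm, om) \<Rightarrow> 2 * (sp\<^sup>2 + sm\<^sup>2) + qstar \<gamma> * om)"

definition vf :: "real \<Rightarrow> state \<Rightarrow> state" where
  "vf \<gamma> p = (case p of (sp, sm, np, nm, om) \<Rightarrow>
     (let q = qfun \<gamma> p in
      ( - (2 - q) * sp - 2 * nm\<^sup>2,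
        - (2 - q) * sm - 2 * sqrt 3 * np * nm,
        (q + 2 * sp) * np + 2 * sqrt 3 * sm * nm,
        (q + 2 * sp) * nm + 2 * sqrt 3 * sm * np,
        2 * (q - qstar \<gamma>) * om)))"

definition B1_VI0 :: "state set" where
  "B1_VI0 = {(sp, sm, np, nm, om). om + sp\<^sup>2 + sm\<^sup>2 + nm\<^sup>2 = 1 \<and> om \<ge> 0 \<and> nm > \<bar>np\<bar>}"

definition is_solution :: "real \<Rightarrow> (real \<Rightarrow> state) \<Rightarrow> bool" where
  "is_solution \<gamma> \<phi> \<longleftrightarrow> (\<forall>t. (\<phi> has_vector_derivative vf \<gamma> (\<phi> t)) (at t))"

definition alpha_limit :: "(real \<Rightarrow> state) \<Rightarrow> state set" where
  "alpha_limit \<phi> = {y. \<exists>\<tau> :: nat \<Rightarrow> real. filterlim \<tau> at_bot sequentially \<and>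
                          (\<lambda>k. \<phi> (\<tau> k)) \<longlonglongrightarrow> y}"

definition Omega :: "state \<Rightarrow> real" where
  "Omega p = (case p of (sp, sm, np, nm, om) \<Rightarrow> om)"

definition Taub1 :: state where
  "Taub1 = (-1, 0, 0, 0, 0)"

end

theory Submission imports Defs begin

definition Sp :: "state \<Rightarrow> real" where "Sp p = fst p"
definition Sm :: "state \<Rightarrow> real" where "Sm p = fst (snd p)"
definition Np :: "state \<Rightarrow> real" where "Np p = fst (snd (snd p))"
definition Nm :: "state \<Rightarrow> real" where "Nm p = fst (snd (snd (snd p)))"
definition Om :: "state \<Rightarrow> real" where "Om p = snd (snd (snd (snd p)))"

lemma qfun_comp: "qfun g p = 2 * (Sp p ^ 2 + Sm p ^ 2) + qstar g * Om p"
  by (cases p) (simp add: qfun_def Sp_def Sm_def Om_def)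

lemma vf_comp:
  "Sp (vf g p) = - (2 - qfun g p) * Sp p - 2 * Nm p ^ 2"
  "Sm (vf g p) = - (2 - qfun g p) * Sm p - 2 * sqrt 3 * Np p * Nm p"
  "Np (vf g p) = (qfun g p + 2 * Sp p) * Np p + 2 * sqrt 3 * Sm p * Nm p"
  "Nm (vf g p) = (qfun g p + 2 * Sp p) * Nm p + 2 * sqrt 3 * Sm p * Np p"
  "Om (vf g p) = 2 * (qfun g p - qstar g) * Om p"
  by (cases p, simp add: vf_def Let_def Sp_def Sm_def Np_def Nm_def Om_def)+

lemma Omega_Om: "Omega p = Om p"
  by (cases p) (simp add: Omega_def Om_def)

lemma comp_deriv:
  assumes "is_solution g \<phi>"
  shows "((\<lambda>t. Sp (\<phi> t)) has_real_derivative Sp (vf g (\<phi> t))) (at t)"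
    and "((\<lambda>t. Sm (\<phi> t)) has_real_derivative Sm (vf g (\<phi> t))) (at t)"
    and "((\<lambda>t. Np (\<phi> t)) has_real_derivative Np (vf g (\<phi> t))) (at t)"
    and "((\<lambda>t. Nm (\<phi> t)) has_real_derivative Nm (vf g (\<phi> t))) (at t)"
    and "((\<lambda>t. Om (\<phi> t)) has_real_derivative Om (vf g (\<phi> t))) (at t)"
proof -
  have d: "(\<phi> has_derivative (\<lambda>x. x *\<^sub>R vf g (\<phi> t))) (at t)"
    using assms unfolding is_solution_def has_vector_derivative_def by blast
  show "((\<lambda>t. Sp (\<phi> t)) has_real_derivative Sp (vf g (\<phi> t))) (at t)"
    unfolding has_real_derivative_iff_has_vector_derivative has_vector_derivative_def Sp_def
    using has_derivative_fst[OF d] by simp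
  show "((\<lambda>t. Sm (\<phi> t)) has_real_derivative Sm (vf g (\<phi> t))) (at t)"
    unfolding has_real_derivative_iff_has_vector_derivative has_vector_derivative_def Sm_def
    using has_derivative_fst[OF has_derivative_snd[OF d]] by simp
  show "((\<lambda>t. Np (\<phi> t)) has_real_derivative Np (vf g (\<phi> t))) (at t)"
    unfolding has_real_derivative_iff_has_vector_derivative has_vector_derivative_def Np_def
    using has_derivative_fst[OF has_derivative_snd[OF has_derivative_snd[OF d]]] by simp
  show "((\<lambda>t. Nm (\<phi> t)) has_real_derivative Nm (vf g (\<phi> t))) (at t)"
    unfolding has_real_derivative_iff_has_vector_derivative has_vector_derivative_def Nm_def
    using has_derivative_fst[OF has_derivative_snd[OF has_derivative_snd[OF has_derivative_snd[OF d]]]] by simp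
  show "((\<lambda>t. Om (\<phi> t)) has_real_derivative Om (vf g (\<phi> t))) (at t)"
    unfolding has_real_derivative_iff_has_vector_derivative has_vector_derivative_def Om_def
    using has_derivative_snd[OF has_derivative_snd[OF has_derivative_snd[OF has_derivative_snd[OF d]]]] by simp
qed


lemma neg_forward:
  fixes u u' :: "real \<Rightarrow> real"
  assumes "t1 \<le> t0" and der: "\<And>t. (u has_real_derivative u' t) (at t)"
    and bd: "\<And>t. t1 \<le> t \<Longrightarrow> t \<le> t0 \<Longrightarrow> u' t \<le> L * \<bar>u t\<bar>" and neg: "u t1 < 0"
  shows "u t0 < 0"
proof (rule ccontr)
  assume a: "\<not> u t0 < 0"
  define S where "S = {t1..t0} \<inter> {t. 0 \<le> u t}"
  have cont: "continuous_on UNIV u"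
    using der by (meson DERIV_isCont continuous_at_imp_continuous_on)
  have "closed {t. 0 \<le> u t}" using closed_Collect_le[OF continuous_on_const cont] .
  then have "compact S" unfolding S_def by (intro compact_Int_closed) auto
  moreover have "S \<noteq> {}" using a assms(1) unfolding S_def by auto
  ultimately obtain t2 where t2: "t2 \<in> S" "\<forall>t\<in>S. t2 \<le> t"
    using compact_attains_inf by blast
  have "t1 \<noteq> t2" using t2 neg unfolding S_def by auto
  then have lt: "t1 < t2" using t2 unfolding S_def by auto
  define g where "g t = u t * exp (L * t)" for t
  have dg: "(g has_real_derivative ((u' t + L * u t) * exp (L * t))) (at t)" for t
    unfolding g_def by (auto intro!: derivative_eq_intros der simp: algebra_simps)
  from MVT2[OF lt, of g "\<lambda>t. (u' t + L * u t) * exp (L * t)"] dg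
  obtain z where z: "t1 < z" "z < t2" "g t2 - g t1 = (t2 - t1) * ((u' z + L * u z) * exp (L * z))"
    by blast
  have "z \<notin> S" using z t2 by force
  moreover have "z \<in> {t1..t0}" using z t2 unfolding S_def by auto
  ultimately have uz: "u z < 0" unfolding S_def by auto
  have "u' z \<le> L * \<bar>u z\<bar>" using bd z t2 unfolding S_def by auto
  with uz have "u' z + L * u z \<le> 0" by auto
  then have "(t2 - t1) * ((u' z + L * u z) * exp (L * z)) \<le> 0"
    using z by (intro mult_nonneg_nonpos mult_nonpos_nonneg) auto
  then have "g t2 \<le> g t1" using z by linarith
  moreover have "g t1 < 0" unfolding g_def using neg by (simp add: mult_neg_pos)
  ultimately have "g t2 < 0" by linarith
  then have "u t2 < 0" unfolding g_def by (simp add: mult_less_0_iff)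
  then show False using t2 unfolding S_def by auto
qed

lemma pos_backward:
  fixes u u' :: "real \<Rightarrow> real"
  assumes "t1 \<le> t0" and der: "\<And>t. (u has_real_derivative u' t) (at t)"
    and bd: "\<And>t. t1 \<le> t \<Longrightarrow> t \<le> t0 \<Longrightarrow> u' t \<le> L * \<bar>u t\<bar>" and pos: "u t0 > 0"
  shows "u t1 > 0"
proof (rule ccontr)
  assume a: "\<not> u t1 > 0"
  define S where "S = {t1..t0} \<inter> {t. u t \<le> 0}"
  have cont: "continuous_on UNIV u"
    using der by (meson DERIV_isCont continuous_at_imp_continuous_on)
  have "closed {t. u t \<le> 0}" using closed_Collect_le[OF cont continuous_on_const] .
  then have "compact S" unfolding S_def by (intro compact_Int_closed) auto
  moreover have "S \<noteq> {}" using a assms(1) unfolding S_def by auto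
  ultimately obtain t2 where t2: "t2 \<in> S" "\<forall>t\<in>S. t \<le> t2"
    using compact_attains_sup by blast
  have "t0 \<noteq> t2" using t2 pos unfolding S_def by auto
  then have lt: "t2 < t0" using t2 unfolding S_def by auto
  define g where "g t = u t * exp (- L * t)" for t
  have dg: "(g has_real_derivative ((u' t - L * u t) * exp (- L * t))) (at t)" for t
    unfolding g_def by (auto intro!: derivative_eq_intros der simp: algebra_simps)
  from MVT2[OF lt, of g "\<lambda>t. (u' t - L * u t) * exp (- L * t)"] dg
  obtain z where z: "t2 < z" "z < t0" "g t0 - g t2 = (t0 - t2) * ((u' z - L * u z) * exp (- L * z))"
    by blast
  have "z \<notin> S" using z t2 by force
  moreover have "z \<in> {t1..t0}" using z t2 unfolding S_def by auto
  ultimately have uz: "u z > 0" unfolding S_def by auto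
  have "u' z \<le> L * \<bar>u z\<bar>" using bd z t2 unfolding S_def by auto
  with uz have "u' z - L * u z \<le> 0" by auto
  then have "(t0 - t2) * ((u' z - L * u z) * exp (- L * z)) \<le> 0"
    using z by (intro mult_nonneg_nonpos mult_nonpos_nonneg) auto
  then have "g t0 \<le> g t2" using z by linarith
  moreover have "g t0 > 0" unfolding g_def using pos by simp
  ultimately have "g t2 > 0" by linarith
  then have "u t2 > 0" unfolding g_def by (simp add: zero_less_mult_iff)
  then show False using t2 unfolding S_def by auto
qed

definition Gf :: "state \<Rightarrow> real" where "Gf p = Om p + Sp p ^ 2 + Sm p ^ 2 + Nm p ^ 2 - 1"
definition Mf :: "state \<Rightarrow> real" where "Mf p = Nm p ^ 2 - Np p ^ 2"
definition Ff :: "state \<Rightarrow> real" where "Ff p = Sm p ^ 2 + Nm p ^ 2"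

lemma G_ident: "Om (vf g p) + 2 * Sp p * Sp (vf g p) + 2 * Sm p * Sm (vf g p) + 2 * Nm p * Nm (vf g p)
   = 2 * qfun g p * Gf p"
  unfolding vf_comp Gf_def qfun_comp by (simp add: algebra_simps power2_eq_square)

lemma M_ident: "2 * Nm p * Nm (vf g p) - 2 * Np p * Np (vf g p) = 2 * (qfun g p + 2 * Sp p) * Mf p"
  unfolding vf_comp Mf_def by (simp add: algebra_simps power2_eq_square)

lemma F_ident: "2 * Sm p * Sm (vf g p) + 2 * Nm p * Nm (vf g p)
   = - 2 * (2 - qfun g p) * Sm p ^ 2 + 2 * (qfun g p + 2 * Sp p) * Nm p ^ 2"
  unfolding vf_comp by (simp add: algebra_simps power2_eq_square)

context
  fixes g :: real and \<phi> :: "real \<Rightarrow> state"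
  assumes sol: "is_solution g \<phi>"
begin

lemma G_deriv: "((\<lambda>t. Gf (\<phi> t)) has_real_derivative (2 * qfun g (\<phi> t) * Gf (\<phi> t))) (at t)"
proof -
  have "((\<lambda>t. Om (\<phi> t) + Sp (\<phi> t)^2 + Sm (\<phi> t)^2 + Nm (\<phi> t)^2 - 1) has_real_derivative
     (Om (vf g (\<phi> t)) + 2 * Sp (\<phi> t) * Sp (vf g (\<phi> t)) + 2 * Sm (\<phi> t) * Sm (vf g (\<phi> t)) + 2 * Nm (\<phi> t) * Nm (vf g (\<phi> t)))) (at t)"
    by (auto intro!: derivative_eq_intros comp_deriv[OF sol])
  then show ?thesis unfolding G_ident Gf_def .
qed

lemma M_deriv: "((\<lambda>t. Mf (\<phi> t)) has_real_derivative (2 * (qfun g (\<phi> t) + 2 * Sp (\<phi> t)) * Mf (\<phi> t))) (at t)"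
proof -
  have "((\<lambda>t. Nm (\<phi> t)^2 - Np (\<phi> t)^2) has_real_derivative
     (2 * Nm (\<phi> t) * Nm (vf g (\<phi> t)) - 2 * Np (\<phi> t) * Np (vf g (\<phi> t)))) (at t)"
    by (auto intro!: derivative_eq_intros comp_deriv[OF sol])
  then show ?thesis unfolding M_ident Mf_def .
qed

lemma F_deriv: "((\<lambda>t. Ff (\<phi> t)) has_real_derivative
   (- 2 * (2 - qfun g (\<phi> t)) * Sm (\<phi> t) ^ 2 + 2 * (qfun g (\<phi> t) + 2 * Sp (\<phi> t)) * Nm (\<phi> t) ^ 2)) (at t)"
proof -
  have "((\<lambda>t. Sm (\<phi> t)^2 + Nm (\<phi> t)^2) has_real_derivative
     (2 * Sm (\<phi> t) * Sm (vf g (\<phi> t)) + 2 * Nm (\<phi> t) * Nm (vf g (\<phi> t)))) (at t)"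
    by (auto intro!: derivative_eq_intros comp_deriv[OF sol])
  then show ?thesis unfolding F_ident Ff_def .
qed

lemma Om_deriv: "((\<lambda>t. Om (\<phi> t)) has_real_derivative (2 * (qfun g (\<phi> t) - qstar g) * Om (\<phi> t))) (at t)"
  using comp_deriv(5)[OF sol] unfolding vf_comp .

lemma cont_comp:
  "continuous_on UNIV (\<lambda>t. Sp (\<phi> t))" "continuous_on UNIV (\<lambda>t. Sm (\<phi> t))"
  "continuous_on UNIV (\<lambda>t. Np (\<phi> t))" "continuous_on UNIV (\<lambda>t. Nm (\<phi> t))"
  "continuous_on UNIV (\<lambda>t. Om (\<phi> t))"
  using comp_deriv[OF sol] by (meson DERIV_isCont continuous_at_imp_continuous_on)+

end


lemma cont_bound:
  fixes f :: "real \<Rightarrow> real"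
  assumes "continuous_on {a..b} f"
  shows "\<exists>L. \<forall>t\<in>{a..b}. \<bar>f t\<bar> \<le> L"
proof -
  have "bounded (f ` {a..b})"
    using compact_continuous_image[OF assms] compact_imp_bounded by blast
  then show ?thesis unfolding bounded_iff by auto
qed

lemma mul_le_abs:
  fixes a x L :: real
  assumes "\<bar>a\<bar> \<le> L"
  shows "a * x \<le> L * \<bar>x\<bar>"
proof -
  have "a * x \<le> \<bar>a * x\<bar>" by simp
  also have "\<dots> = \<bar>a\<bar> * \<bar>x\<bar>" by (simp add: abs_mult)
  also have "\<dots> \<le> L * \<bar>x\<bar>" by (rule mult_right_mono) (use assms in auto)
  finally show ?thesis .
qed

lemma B1_iff: "p \<in> B1_VI0 \<longleftrightarrow> Gf p = 0 \<and> 0 \<le> Om p \<and> \<bar>Np p\<bar> < Nm p"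
  by (cases p) (auto simp: B1_VI0_def Gf_def Om_def Sp_def Sm_def Np_def Nm_def algebra_simps)

lemma Mf_pos: assumes "\<bar>Np p\<bar> < Nm p" shows "0 < Mf p"
proof -
  have "\<bar>Np p\<bar> ^ 2 < Nm p ^ 2" by (rule power_strict_mono) (use assms in auto)
  then show ?thesis unfolding Mf_def by simp
qed

lemma Ff_pos: assumes "0 < Mf p" shows "0 < Ff p"
  using assms unfolding Mf_def Ff_def
  by (metis add_pos_nonneg diff_gt_0_iff_gt order_le_less_trans zero_le_power2 add.commute)

lemma norm_bound:
  assumes "Gf p = 0" "0 \<le> Om p" "0 < Mf p"
  shows "norm p \<le> 5"
proof -
  obtain a b c d e where p: "p = (a, b, c, d, e)" by (cases p) auto
  from assms have c: "e + a^2 + b^2 + d^2 = 1" "0 \<le> e" "c^2 < d^2"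
    by (auto simp: p Gf_def Om_def Sp_def Sm_def Np_def Nm_def Mf_def)
  have sq: "0 \<le> a^2" "0 \<le> b^2" "0 \<le> d^2" "0 \<le> c^2" by simp_all
  have "a^2 \<le> 1" "b^2 \<le> 1" "d^2 \<le> 1" "e \<le> 1" "c^2 \<le> 1"
    using c sq by linarith+
  then have "\<bar>a\<bar> \<le> 1" "\<bar>b\<bar> \<le> 1" "\<bar>c\<bar> \<le> 1" "\<bar>d\<bar> \<le> 1" "\<bar>e\<bar> \<le> 1"
    using c(2) by (auto simp: abs_square_le_1)
  have "norm p \<le> norm a + norm (b, c, d, e)" unfolding p by (rule norm_Pair_le)
  also have "norm (b, c, d, e) \<le> norm b + norm (c, d, e)" by (rule norm_Pair_le)
  also have "norm (c, d, e) \<le> norm c + norm (d, e)" by (rule norm_Pair_le)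
  also have "norm (d, e) \<le> norm d + norm e" by (rule norm_Pair_le)
  finally show ?thesis using \<open>\<bar>a\<bar> \<le> 1\<close> \<open>\<bar>b\<bar> \<le> 1\<close> \<open>\<bar>c\<bar> \<le> 1\<close> \<open>\<bar>d\<bar> \<le> 1\<close> \<open>\<bar>e\<bar> \<le> 1\<close>
    by simp
qed

context
  fixes g :: real and \<phi> :: "real \<Rightarrow> state"
  assumes sol: "is_solution g \<phi>"
begin

lemma qcont: "continuous_on UNIV (\<lambda>t. qfun g (\<phi> t))"
  unfolding qfun_comp by (intro continuous_intros cont_comp[OF sol])

lemma invariance:
  assumes x: "\<phi> 0 \<in> B1_VI0" and t: "t \<le> 0"
  shows "Gf (\<phi> t) = 0 \<and> 0 \<le> Om (\<phi> t) \<and> 0 < Mf (\<phi> t)"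
proof -
  from x have x0: "Gf (\<phi> 0) = 0" "0 \<le> Om (\<phi> 0)" "0 < Mf (\<phi> 0)"
    by (auto simp: B1_iff intro: Mf_pos)
  have c1: "continuous_on {t..0} (\<lambda>s. 2 * qfun g (\<phi> s))"
    by (intro continuous_intros continuous_on_subset[OF qcont]) auto
  have c2: "continuous_on {t..0} (\<lambda>s. 2 * (qfun g (\<phi> s) - qstar g))"
    by (intro continuous_intros continuous_on_subset[OF qcont]) auto
  have c3: "continuous_on {t..0} (\<lambda>s. 2 * (qfun g (\<phi> s) + 2 * Sp (\<phi> s)))"
    by (intro continuous_intros continuous_on_subset[OF qcont] continuous_on_subset[OF cont_comp(1)[OF sol]]) auto
  obtain L1 where L1: "\<forall>s\<in>{t..0}. \<bar>2 * qfun g (\<phi> s)\<bar> \<le> L1" using cont_bound[OF c1] by blast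
  obtain L2 where L2: "\<forall>s\<in>{t..0}. \<bar>2 * (qfun g (\<phi> s) - qstar g)\<bar> \<le> L2" using cont_bound[OF c2] by blast
  obtain L3 where L3: "\<forall>s\<in>{t..0}. \<bar>2 * (qfun g (\<phi> s) + 2 * Sp (\<phi> s))\<bar> \<le> L3" using cont_bound[OF c3] by blast
  have "\<not> Gf (\<phi> t) < 0"
  proof
    assume neg: "Gf (\<phi> t) < 0"
    have bd: "2 * qfun g (\<phi> s) * Gf (\<phi> s) \<le> L1 * \<bar>Gf (\<phi> s)\<bar>" if "t \<le> s" "s \<le> 0" for s
      using L1 that by (intro mul_le_abs) auto
    from neg_forward[of t 0 "\<lambda>s. Gf (\<phi> s)" "\<lambda>s. 2 * qfun g (\<phi> s) * Gf (\<phi> s)" L1, OF t G_deriv[OF sol] bd neg]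
    have "Gf (\<phi> 0) < 0" .
    with x0 show False by simp
  qed
  moreover have "\<not> Gf (\<phi> t) > 0"
  proof
    assume "Gf (\<phi> t) > 0"
    then have neg: "- Gf (\<phi> t) < 0" by simp
    have bd: "- (2 * qfun g (\<phi> s) * Gf (\<phi> s)) \<le> L1 * \<bar>- Gf (\<phi> s)\<bar>" if "t \<le> s" "s \<le> 0" for s
    proof -
      have "(2 * qfun g (\<phi> s)) * (- Gf (\<phi> s)) \<le> L1 * \<bar>- Gf (\<phi> s)\<bar>"
        using L1 that by (intro mul_le_abs) auto
      then show ?thesis by simp
    qed
    have "- Gf (\<phi> 0) < 0"
      using neg_forward[of t 0 "\<lambda>s. - Gf (\<phi> s)" "\<lambda>s. - (2 * qfun g (\<phi> s) * Gf (\<phi> s))" L1, OF t DERIV_minus[OF G_deriv[OF sol]] bd neg] .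
    with x0 show False by simp
  qed
  moreover have "\<not> Om (\<phi> t) < 0"
  proof
    assume neg: "Om (\<phi> t) < 0"
    have bd: "2 * (qfun g (\<phi> s) - qstar g) * Om (\<phi> s) \<le> L2 * \<bar>Om (\<phi> s)\<bar>" if "t \<le> s" "s \<le> 0" for s
      using L2 that by (intro mul_le_abs) auto
    from neg_forward[of t 0 "\<lambda>s. Om (\<phi> s)" "\<lambda>s. 2 * (qfun g (\<phi> s) - qstar g) * Om (\<phi> s)" L2, OF t Om_deriv[OF sol] bd neg]
    have "Om (\<phi> 0) < 0" .
    with x0 show False by simp
  qed
  moreover have "0 < Mf (\<phi> t)"
  proof -
    have bd: "2 * (qfun g (\<phi> s) + 2 * Sp (\<phi> s)) * Mf (\<phi> s) \<le> L3 * \<bar>Mf (\<phi> s)\<bar>" if "t \<le> s" "s \<le> 0" for s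
      using L3 that by (intro mul_le_abs) auto
    show ?thesis
      using pos_backward[of t 0 "\<lambda>s. Mf (\<phi> s)" "\<lambda>s. 2 * (qfun g (\<phi> s) + 2 * Sp (\<phi> s)) * Mf (\<phi> s)" L3, OF t M_deriv[OF sol] bd x0(3)] .
  qed
  ultimately show ?thesis by linarith
qed

end


lemma region:
  assumes G: "Gf p = 0" and O: "0 \<le> Om p" and w: "1 + Sp p < (2 - qstar g) / 8"
    and qs: "0 < qstar g" "qstar g < 2"
  shows "(2 - qstar g) / 2 < qfun g p - qstar g" and "-1 \<le> Sp p" and "Sp p \<le> 0"
proof -
  have c: "Om p + Sp p ^ 2 + Sm p ^ 2 + Nm p ^ 2 = 1" using G unfolding Gf_def by simp
  have sq: "0 \<le> Sm p ^ 2" "0 \<le> Nm p ^ 2" by simp_all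
  have "Sp p ^ 2 \<le> 1" using c O sq by linarith
  then show lo: "-1 \<le> Sp p" by (simp add: abs_square_le_1 abs_le_iff)
  have "(2 - qstar g) / 8 < 1" using qs by simp
  then show hi: "Sp p \<le> 0" using w by linarith
  have q2: "2 - qfun g p = (2 - qstar g) * Om p + 2 * Nm p ^ 2"
    using c unfolding qfun_comp by (simp add: algebra_simps)
  have e1: "1 - Sp p ^ 2 = Om p + Sm p ^ 2 + Nm p ^ 2" using c by (simp add: algebra_simps)
  have "2 - qfun g p = (2 - qstar g) * Om p + 2 * Nm p ^ 2" by (rule q2)
  also have "\<dots> \<le> 2 * Om p + 2 * Nm p ^ 2" using qs O by (simp add: mult_right_mono)
  also have "\<dots> \<le> 2 * (1 - Sp p ^ 2)" unfolding e1 using sq by simp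
  also have "1 - Sp p ^ 2 = (1 + Sp p) * (1 - Sp p)" by (simp add: power2_eq_square algebra_simps)
  also have "2 * ((1 + Sp p) * (1 - Sp p)) \<le> 2 * ((1 + Sp p) * 2)"
    using lo hi by (intro mult_left_mono) auto
  finally have "2 - qfun g p \<le> 4 * (1 + Sp p)" by simp
  moreover have w8: "8 * (1 + Sp p) < 2 - qstar g" using w by (simp add: field_simps)
  ultimately have "2 - qstar g < 2 * (qfun g p - qstar g)" by (smt (verit))
  then show "(2 - qstar g) / 2 < qfun g p - qstar g" by (simp add: field_simps)
qed

lemma F_ineq:
  assumes G: "Gf p = 0" and O: "0 \<le> Om p" and lo: "-1 \<le> Sp p" and hi: "Sp p \<le> 0"
    and qs: "qstar g < 2"
  shows "- 2 * (2 - qfun g p) * Sm p ^ 2 + 2 * (qfun g p + 2 * Sp p) * Nm p ^ 2 \<le> 4 * Om p * Ff p"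
proof -
  define w where "w = 1 + Sp p"
  define R where "R = Nm p ^ 2"
  define f where "f = Ff p"
  have c: "Om p + Sp p ^ 2 + Sm p ^ 2 + Nm p ^ 2 = 1" using G unfolding Gf_def by simp
  have f: "f = Sm p ^ 2 + R" unfolding f_def Ff_def R_def by simp
  have R0: "0 \<le> R" unfolding R_def by simp
  have Rf: "R \<le> f" using f by simp
  have q2: "2 - qfun g p = (2 - qstar g) * Om p + 2 * R"
    using c unfolding qfun_comp R_def by (simp add: algebra_simps)
  have id: "- 2 * (2 - qfun g p) * Sm p ^ 2 + 2 * (qfun g p + 2 * Sp p) * Nm p ^ 2
      = - 2 * (2 - qfun g p) * f + 4 * w * R"
    unfolding f w_def R_def by (simp add: algebra_simps)
  have wid: "w * (2 - w) = f + Om p" using c unfolding w_def f R_def by (simp add: power2_eq_square algebra_simps)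
  have "Sp p * (1 + Sp p) \<le> 0" using lo hi by (intro mult_nonpos_nonneg) auto
  then have "w \<le> w * (2 - w)" unfolding w_def by (simp add: algebra_simps)
  then have wle: "w \<le> f + Om p" using wid by simp
  have "0 \<le> (2 - qstar g) * Om p * f" using qs O Rf R0 by simp
  then have "- 2 * (2 - qfun g p) * f \<le> - 4 * R * f" unfolding q2 by (simp add: algebra_simps)
  moreover have "4 * w * R \<le> 4 * (f + Om p) * R" using wle R0 by (simp add: mult_right_mono)
  moreover have "Om p * R \<le> Om p * f" using O Rf by (simp add: mult_left_mono)
  ultimately show ?thesis unfolding id f_def[symmetric] by (simp add: algebra_simps)
qed

lemma filterlim_at_bot_le:
  fixes u v :: "nat \<Rightarrow> real"
  assumes "filterlim u at_bot sequentially" "eventually (\<lambda>k. v k \<le> u k) sequentially"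
  shows "filterlim v at_bot sequentially"
  unfolding filterlim_at_bot
proof
  fix Z
  have "eventually (\<lambda>k. u k \<le> Z) sequentially" using assms(1) by (simp add: filterlim_at_bot)
  with assms(2) show "eventually (\<lambda>k. v k \<le> Z) sequentially"
    by eventually_elim auto
qed

theorem mainTheorem1:
  fixes \<gamma> :: real and x :: state and \<phi> :: "real \<Rightarrow> state"
  assumes "2/3 < \<gamma>" and "\<gamma> < 2"
    and "x \<in> B1_VI0"
    and "is_solution \<gamma> \<phi>" and "\<phi> 0 = x"
    and "Taub1 \<in> alpha_limit \<phi>"
  shows "\<exists>y \<in> alpha_limit \<phi>. y \<noteq> Taub1 \<and> Omega y = 0"
proof -
  have qs: "0 < qstar \<gamma>" "qstar \<gamma> < 2" using assms(1,2) unfolding qstar_def by auto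
  define \<delta> where "\<delta> = (2 - qstar \<gamma>) / 8"
  have \<delta>: "0 < \<delta>" using qs unfolding \<delta>_def by simp
  note sol = assms(4)
  have x0: "\<phi> 0 \<in> B1_VI0" using assms(3,5) by simp
  have inv: "Gf (\<phi> t) = 0 \<and> 0 \<le> Om (\<phi> t) \<and> 0 < Mf (\<phi> t)" if "t \<le> 0" for t
    using invariance[OF sol x0 that] .
  obtain \<tau> where \<tau>: "filterlim \<tau> at_bot sequentially" "(\<lambda>k. \<phi> (\<tau> k)) \<longlonglongrightarrow> Taub1"
    using assms(6) unfolding alpha_limit_def by blast
  have Sp_lim: "(\<lambda>k. Sp (\<phi> (\<tau> k))) \<longlonglongrightarrow> -1"
    using tendsto_fst[OF \<tau>(2)] by (simp add: Sp_def Taub1_def)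
  have Om_lim: "(\<lambda>k. Om (\<phi> (\<tau> k))) \<longlonglongrightarrow> 0"
    using tendsto_snd[OF tendsto_snd[OF tendsto_snd[OF tendsto_snd[OF \<tau>(2)]]]] by (simp add: Om_def Taub1_def)
  have Sm_lim: "(\<lambda>k. Sm (\<phi> (\<tau> k))) \<longlonglongrightarrow> 0"
    using tendsto_fst[OF tendsto_snd[OF \<tau>(2)]] by (simp add: Sm_def Taub1_def)
  have Nm_lim: "(\<lambda>k. Nm (\<phi> (\<tau> k))) \<longlonglongrightarrow> 0"
    using tendsto_fst[OF tendsto_snd[OF tendsto_snd[OF tendsto_snd[OF \<tau>(2)]]]] by (simp add: Nm_def Taub1_def)
  have Ff_lim: "(\<lambda>k. Ff (\<phi> (\<tau> k))) \<longlonglongrightarrow> 0"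
    unfolding Ff_def using tendsto_add[OF tendsto_power[OF Sm_lim, of 2] tendsto_power[OF Nm_lim, of 2]] by simp
  have ev_le: "eventually (\<lambda>k. \<tau> k \<le> Z) sequentially" for Z
    using \<tau>(1) by (simp add: filterlim_at_bot)
  show ?thesis
  proof (cases "\<exists>s\<le>0. \<forall>t\<le>s. 1 + Sp (\<phi> t) < \<delta>")
    case True
    then obtain s where s: "s \<le> 0" "\<And>t. t \<le> s \<Longrightarrow> 1 + Sp (\<phi> t) < \<delta>" by blast
    define K where "K = 8 / (2 - qstar \<gamma>)"
    have ne: "2 - qstar \<gamma> \<noteq> 0" using qs by simp
    have K: "K * (2 - qstar \<gamma>) = 8" "0 < K" using qs ne unfolding K_def by (simp_all add: field_simps)
    define U where "U t = Ff (\<phi> t) * exp (- K * Om (\<phi> t))" for t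
    define FD where "FD t = - 2 * (2 - qfun \<gamma> (\<phi> t)) * Sm (\<phi> t) ^ 2 + 2 * (qfun \<gamma> (\<phi> t) + 2 * Sp (\<phi> t)) * Nm (\<phi> t) ^ 2" for t
    define OD where "OD t = 2 * (qfun \<gamma> (\<phi> t) - qstar \<gamma>) * Om (\<phi> t)" for t
    have dU: "(U has_real_derivative (FD t - K * Ff (\<phi> t) * OD t) * exp (- K * Om (\<phi> t))) (at t)" for t
      unfolding U_def
      by (auto intro!: derivative_eq_intros F_deriv[OF sol, unfolded FD_def[symmetric]]
          Om_deriv[OF sol, unfolded OD_def[symmetric]] simp: algebra_simps)
    have Dneg: "(FD t - K * Ff (\<phi> t) * OD t) * exp (- K * Om (\<phi> t)) \<le> 0" if "t \<le> s" for t
    proof -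
      have t0: "t \<le> 0" using that s by simp
      note it = inv[OF t0]
      have w: "1 + Sp (\<phi> t) < (2 - qstar \<gamma>) / 8" using s(2)[OF that] unfolding \<delta>_def .
      note r = region[OF conjunct1[OF it] conjunct1[OF conjunct2[OF it]] w qs]
      have F0: "0 \<le> Ff (\<phi> t)" unfolding Ff_def by simp
      have O0: "0 \<le> Om (\<phi> t)" using it by simp
      have "FD t \<le> 4 * Om (\<phi> t) * Ff (\<phi> t)"
        unfolding FD_def using F_ineq[OF conjunct1[OF it] O0 r(2) r(3) qs(2)] .
      moreover have "(2 - qstar \<gamma>) * Om (\<phi> t) \<le> OD t"
      proof -
        have "(2 - qstar \<gamma>) * Om (\<phi> t) \<le> 2 * (qfun \<gamma> (\<phi> t) - qstar \<gamma>) * Om (\<phi> t)"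
          using r(1) O0 by (intro mult_right_mono) auto
        then show ?thesis unfolding OD_def .
      qed
      then have "K * Ff (\<phi> t) * ((2 - qstar \<gamma>) * Om (\<phi> t)) \<le> K * Ff (\<phi> t) * OD t"
        using K F0 by (intro mult_left_mono) auto
      moreover have "K * Ff (\<phi> t) * ((2 - qstar \<gamma>) * Om (\<phi> t)) = (K * (2 - qstar \<gamma>)) * (Ff (\<phi> t) * Om (\<phi> t))"
        by (simp only: mult_ac)
      then have "K * Ff (\<phi> t) * ((2 - qstar \<gamma>) * Om (\<phi> t)) = 8 * Ff (\<phi> t) * Om (\<phi> t)"
        unfolding K(1) by simp
      moreover have "0 \<le> Ff (\<phi> t) * Om (\<phi> t)" using F0 O0 by simp
      ultimately have "FD t - K * Ff (\<phi> t) * OD t \<le> 0" by (simp add: algebra_simps)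
      then show ?thesis by (simp add: mult_nonpos_nonneg)
    qed
    have Umono: "U s \<le> U t" if "t \<le> s" for t
      using DERIV_nonpos_imp_nonincreasing[of t s U] that dU Dneg by fastforce
    have Us: "0 < U s" unfolding U_def using Ff_pos conjunct2[OF conjunct2[OF inv[OF s(1)]]] by simp
    have "(\<lambda>k. Ff (\<phi> (\<tau> k)) * exp (- K * Om (\<phi> (\<tau> k)))) \<longlonglongrightarrow> 0 * exp (- K * 0)"
      by (intro tendsto_intros Ff_lim Om_lim)
    then have U_lim: "(\<lambda>k. U (\<tau> k)) \<longlonglongrightarrow> 0"
      unfolding U_def by simp
    have "eventually (\<lambda>k. U (\<tau> k) < U s) sequentially"
      using order_tendstoD(2)[OF U_lim Us] .
    moreover have "eventually (\<lambda>k. \<tau> k \<le> s) sequentially" by (rule ev_le)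
    ultimately have "eventually (\<lambda>k. False) sequentially"
      by eventually_elim (use Umono in force)
    then show ?thesis by simp
  next
    case False
    then have far: "\<And>s. s \<le> 0 \<Longrightarrow> \<exists>t\<le>s. \<delta> \<le> 1 + Sp (\<phi> t)" by (auto simp: not_less)
    define good where "good k \<longleftrightarrow> \<tau> k \<le> 0 \<and> 1 + Sp (\<phi> (\<tau> k)) < \<delta>" for k
    have "eventually (\<lambda>k. Sp (\<phi> (\<tau> k)) < \<delta> - 1) sequentially"
      using order_tendstoD(2)[OF Sp_lim] \<delta> by simp
    then have ev_good: "eventually good sequentially"
      using ev_le[of 0] unfolding good_def by eventually_elim auto
    have cSp: "continuous_on UNIV (\<lambda>t. 1 + Sp (\<phi> t))"
      by (intro continuous_intros cont_comp[OF sol])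
    have "\<exists>\<sigma>\<le>0. good k \<longrightarrow> (\<sigma> \<le> \<tau> k \<and> \<delta> \<le> 1 + Sp (\<phi> \<sigma>) \<and> Om (\<phi> \<sigma>) \<le> Om (\<phi> (\<tau> k)))" for k
    proof (cases "good k")
      case False then show ?thesis by (intro exI[of _ 0]) auto
    next
      case True
      then have gk: "\<tau> k \<le> 0" "1 + Sp (\<phi> (\<tau> k)) < \<delta>" unfolding good_def by auto
      obtain t0 where t0: "t0 \<le> \<tau> k" "\<delta> \<le> 1 + Sp (\<phi> t0)" using far[OF gk(1)] by blast
      define S where "S = {t0..\<tau> k} \<inter> {t. \<delta> \<le> 1 + Sp (\<phi> t)}"
      have "closed {t. \<delta> \<le> 1 + Sp (\<phi> t)}" using closed_Collect_le[OF continuous_on_const cSp] .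
      then have "compact S" unfolding S_def by (intro compact_Int_closed) auto
      moreover have "S \<noteq> {}" using t0 unfolding S_def by auto
      ultimately obtain \<sigma> where \<sigma>: "\<sigma> \<in> S" "\<forall>t\<in>S. t \<le> \<sigma>"
        using compact_attains_sup by blast
      have "\<sigma> \<noteq> \<tau> k" using \<sigma>(1) gk unfolding S_def by auto
      then have lt: "\<sigma> < \<tau> k" using \<sigma>(1) unfolding S_def by auto
      from MVT2[OF lt, of "\<lambda>t. Om (\<phi> t)" "\<lambda>t. 2 * (qfun \<gamma> (\<phi> t) - qstar \<gamma>) * Om (\<phi> t)"] Om_deriv[OF sol]
      obtain z where z: "\<sigma> < z" "z < \<tau> k"
        "Om (\<phi> (\<tau> k)) - Om (\<phi> \<sigma>) = (\<tau> k - \<sigma>) * (2 * (qfun \<gamma> (\<phi> z) - qstar \<gamma>) * Om (\<phi> z))"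
        by blast
      have "z \<notin> S" using z \<sigma> by force
      moreover have "z \<in> {t0..\<tau> k}" using z \<sigma>(1) unfolding S_def by auto
      ultimately have wz: "1 + Sp (\<phi> z) < (2 - qstar \<gamma>) / 8" unfolding S_def \<delta>_def by auto
      have z0: "z \<le> 0" using z gk by simp
      note it = inv[OF z0]
      note r = region[OF conjunct1[OF it] conjunct1[OF conjunct2[OF it]] wz qs]
      have "0 \<le> 2 * (qfun \<gamma> (\<phi> z) - qstar \<gamma>) * Om (\<phi> z)"
        using r(1) qs it by (intro mult_nonneg_nonneg) auto
      then have "0 \<le> (\<tau> k - \<sigma>) * (2 * (qfun \<gamma> (\<phi> z) - qstar \<gamma>) * Om (\<phi> z))"
        using lt by simp
      then have "Om (\<phi> \<sigma>) \<le> Om (\<phi> (\<tau> k))" using z(3) by linarith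
      moreover have "\<sigma> \<le> 0" "\<delta> \<le> 1 + Sp (\<phi> \<sigma>)" using \<sigma>(1) lt gk unfolding S_def by auto
      ultimately show ?thesis using lt by (intro exI[of _ \<sigma>]) auto
    qed
    then obtain \<sigma> where \<sigma>: "\<And>k. \<sigma> k \<le> 0"
      "\<And>k. good k \<Longrightarrow> \<sigma> k \<le> \<tau> k \<and> \<delta> \<le> 1 + Sp (\<phi> (\<sigma> k)) \<and> Om (\<phi> (\<sigma> k)) \<le> Om (\<phi> (\<tau> k))"
      by metis
    have ev\<sigma>: "eventually (\<lambda>k. \<sigma> k \<le> \<tau> k \<and> \<delta> \<le> 1 + Sp (\<phi> (\<sigma> k)) \<and> Om (\<phi> (\<sigma> k)) \<le> Om (\<phi> (\<tau> k))) sequentially"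
      using ev_good by eventually_elim (use \<sigma>(2) in blast)
    have "eventually (\<lambda>k. \<sigma> k \<le> \<tau> k) sequentially"
      using ev\<sigma> by (rule eventually_mono) auto
    then have \<sigma>lim: "filterlim \<sigma> at_bot sequentially"
      by (rule filterlim_at_bot_le[OF \<tau>(1)])
    have "bounded (range (\<lambda>k. \<phi> (\<sigma> k)))"
      unfolding bounded_iff using norm_bound inv \<sigma>(1) by blast
    then obtain y r where r: "strict_mono r" "((\<lambda>k. \<phi> (\<sigma> k)) \<circ> r) \<longlonglongrightarrow> y"
      using bounded_imp_convergent_subsequence by blast
    have yconv: "(\<lambda>k. \<phi> ((\<sigma> \<circ> r) k)) \<longlonglongrightarrow> y" using r(2) by (simp add: o_def)
    have "filterlim (\<sigma> \<circ> r) at_bot sequentially"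
      unfolding o_def by (rule filterlim_compose[OF \<sigma>lim filterlim_subseq[OF r(1)]])
    then have yin: "y \<in> alpha_limit \<phi>" unfolding alpha_limit_def using yconv by blast
    have evr: "eventually (\<lambda>k. \<sigma> (r k) \<le> \<tau> (r k) \<and> \<delta> \<le> 1 + Sp (\<phi> (\<sigma> (r k))) \<and> Om (\<phi> (\<sigma> (r k))) \<le> Om (\<phi> (\<tau> (r k)))) sequentially"
      using eventually_subseq[OF r(1) ev\<sigma>] .
    have Spy: "(\<lambda>k. 1 + Sp (\<phi> (\<sigma> (r k)))) \<longlonglongrightarrow> 1 + Sp y"
      using tendsto_add[OF tendsto_const tendsto_fst[OF yconv]] by (simp add: Sp_def)
    have "\<delta> \<le> 1 + Sp y"
      by (rule tendsto_lowerbound[OF Spy]) (use evr in \<open>auto elim: eventually_mono\<close>)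
    then have yne: "y \<noteq> Taub1" using \<delta> by (auto simp: Taub1_def Sp_def)
    have Omy: "(\<lambda>k. Om (\<phi> (\<sigma> (r k)))) \<longlonglongrightarrow> Om y"
      using tendsto_snd[OF tendsto_snd[OF tendsto_snd[OF tendsto_snd[OF yconv]]]] by (simp add: Om_def)
    have Omt: "(\<lambda>k. Om (\<phi> (\<tau> (r k)))) \<longlonglongrightarrow> 0"
      using LIMSEQ_subseq_LIMSEQ[OF Om_lim r(1)] by (simp add: o_def)
    have "Om y \<le> 0"
      by (rule tendsto_le[OF _ Omt Omy]) (use evr in \<open>auto elim: eventually_mono\<close>)
    moreover have "0 \<le> Om y"
      by (rule tendsto_lowerbound[OF Omy]) (use inv \<sigma>(1) in auto)
    ultimately have "Omega y = 0" by (simp add: Omega_Om)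
    then show ?thesis using yin yne by blast
  qed
qed

end
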